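(* Let $H=H_\omega$ be a weighted analytic Hilbert space and $\varphi$ a symbol for $H$ with $\rho=\|\varphi\|_\infty<1$. Let $\varepsilon>0$ with $\rho e^{\varepsilon}<1$. Then there exists $K_\varepsilon>0$ such that for every $f(z)=\sum_{k\ge0}b_kz^k$ in the unit ball of $H$ and every integer $l\ge1$, setting $S_lf(z)=\sum_{k=0}^{l-1}b_kz^k$, $$\|f\circ\varphi-(S_lf)\circ\varphi\|_\omega\le K_\varepsilon\,\rho^l e^{\varepsilon l}.$$
   Context: Weighted analytic Hilbert space: $\omega\colon[0,1)\to(0,\infty)$ continuous, positive, integrable, extended radially; $H_\omega$ is the space of analytic $f$ on $\mathbb{D}$ with $\|f\|_\omega^2=|f(0)|^2+\int_{\mathbb{D}}|f'|^2\omega\,dA<\infty$ ($dA$ normalized area measure). A symbol for $H$ is an analytic $\varphi\colon\mathbb{D}\to\mathbb{D}$ such that $f\mapsto f\circ\varphi$ maps $H$ into $H$. *)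

theory Defs
  imports "HOL-Analysis.Analysis"
begin

definition weight :: "(real \<Rightarrow> real) \<Rightarrow> bool" where
  "weight \<omega> \<longleftrightarrow> continuous_on {0..<1} \<omega> \<and> (\<forall>r\<in>{0..<1}. \<omega> r > 0)
     \<and> set_integrable lborel {0..<1} \<omega>"

text \<open>Squared norm: |f(0)|^2 + integral over the disc of |f'|^2 omega(|z|) dA,
  with dA = Lebesgue measure / pi (normalized area measure).\<close>
definition Hnorm2 :: "(real \<Rightarrow> real) \<Rightarrow> (complex \<Rightarrow> complex) \<Rightarrow> ennreal" where
  "Hnorm2 \<omega> f = ennreal ((cmod (f 0))\<^sup>2)
     + (\<integral>\<^sup>+ z. ennreal ((cmod (deriv f z))\<^sup>2 * \<omega> (cmod z)) * indicator (ball 0 1) z \<partial>lborel)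
       / ennreal pi"

definition Hnorm :: "(real \<Rightarrow> real) \<Rightarrow> (complex \<Rightarrow> complex) \<Rightarrow> real" where
  "Hnorm \<omega> f = sqrt (enn2real (Hnorm2 \<omega> f))"

definition inH :: "(real \<Rightarrow> real) \<Rightarrow> (complex \<Rightarrow> complex) \<Rightarrow> bool" where
  "inH \<omega> f \<longleftrightarrow> f holomorphic_on ball 0 1 \<and> Hnorm2 \<omega> f < \<infinity>"

definition symbol :: "(real \<Rightarrow> real) \<Rightarrow> (complex \<Rightarrow> complex) \<Rightarrow> bool" where
  "symbol \<omega> \<phi> \<longleftrightarrow> \<phi> holomorphic_on ball 0 1 \<and> \<phi> ` ball 0 1 \<subseteq> ball 0 1
     \<and> (\<forall>f. inH \<omega> f \<longrightarrow> inH \<omega> (f \<circ> \<phi>))"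

definition taylor_coeff :: "(complex \<Rightarrow> complex) \<Rightarrow> nat \<Rightarrow> complex" where
  "taylor_coeff f k = (deriv ^^ k) f 0 / of_nat (fact k)"

definition partial_sum :: "nat \<Rightarrow> (complex \<Rightarrow> complex) \<Rightarrow> complex \<Rightarrow> complex" where
  "partial_sum l f z = (\<Sum>k<l. taylor_coeff f k * z ^ k)"

end

theory Submission
  imports Defs "HOL-Complex_Analysis.Complex_Analysis" "HOL-Probability.Probability"
begin


lemma Complex_pair_measurable[measurable]:
  "(\<lambda>p::real\<times>real. Complex (fst p) (snd p)) \<in> borel_measurable (lborel \<Otimes>\<^sub>M lborel)"
proof -
  have "(\<lambda>p::real\<times>real. Complex (fst p) (snd p)) = (\<lambda>p. complex_of_real (fst p) + \<i> * complex_of_real (snd p))"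
    by (auto simp: complex_eq_iff)
  then show ?thesis by simp
qed

lemma lborel_complex_prod:
  "(lborel :: complex measure) = distr (lborel \<Otimes>\<^sub>M lborel) borel (\<lambda>p. Complex (fst p) (snd p))"
proof (rule lborel_eqI)
  fix l u :: complex assume le: "\<And>b. b \<in> Basis \<Longrightarrow> l \<bullet> b \<le> u \<bullet> b"
  have a: "Re l \<le> Re u" "Im l \<le> Im u" using le[of 1] le[of \<i>] by (auto simp: Basis_complex_def)
  have eq: "(\<lambda>p. Complex (fst p) (snd p)) -` box l u \<inter> space (lborel \<Otimes>\<^sub>M lborel)
      = {Re l<..<Re u} \<times> {Im l<..<Im u}"
    by (auto simp: box_def Basis_complex_def space_pair_measure)
  have "emeasure (distr (lborel \<Otimes>\<^sub>M lborel) borel (\<lambda>p. Complex (fst p) (snd p))) (box l u)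
      = emeasure (lborel \<Otimes>\<^sub>M lborel) ({Re l<..<Re u} \<times> {Im l<..<Im u})"
    by (subst emeasure_distr) (auto simp: eq)
  also have "\<dots> = emeasure lborel {Re l<..<Re u} * emeasure lborel {Im l<..<Im u}"
    by (rule lborel.emeasure_pair_measure_Times) auto
  also have "\<dots> = ennreal ((Re u - Re l) * (Im u - Im l))"
    using a by (simp add: ennreal_mult)
  also have "(Re u - Re l) * (Im u - Im l) = (\<Prod>b\<in>Basis. (u - l) \<bullet> b)"
    by (simp add: Basis_complex_def)
  finally show "emeasure (distr (lborel \<Otimes>\<^sub>M lborel) borel (\<lambda>p. Complex (fst p) (snd p))) (box l u) = (\<Prod>b\<in>Basis. (u - l) \<bullet> b)" .
qed simp

lemma nn_integral_complex_iter:
  fixes F :: "complex \<Rightarrow> ennreal"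
  assumes [measurable]: "F \<in> borel_measurable borel"
  shows "(\<integral>\<^sup>+z. F z \<partial>lborel) = (\<integral>\<^sup>+y. \<integral>\<^sup>+x. F (Complex x y) \<partial>lborel \<partial>lborel)"
proof -
  have "(\<integral>\<^sup>+z. F z \<partial>lborel) = (\<integral>\<^sup>+p. F (Complex (fst p) (snd p)) \<partial>(lborel \<Otimes>\<^sub>M lborel))"
    by (subst lborel_complex_prod) (simp add: nn_integral_distr)
  also have "\<dots> = (\<integral>\<^sup>+y. \<integral>\<^sup>+x. F (Complex x y) \<partial>lborel \<partial>lborel)"
    by (subst lborel_pair.nn_integral_snd[symmetric]) (auto simp: case_prod_beta)
  finally show ?thesis .
qed

lemma nn_integral_complex_iter':
  fixes F :: "complex \<Rightarrow> ennreal"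
  assumes [measurable]: "F \<in> borel_measurable borel"
  shows "(\<integral>\<^sup>+z. F z \<partial>lborel) = (\<integral>\<^sup>+x. \<integral>\<^sup>+y. F (Complex x y) \<partial>lborel \<partial>lborel)"
proof -
  have "(\<integral>\<^sup>+z. F z \<partial>lborel) = (\<integral>\<^sup>+p. F (Complex (fst p) (snd p)) \<partial>(lborel \<Otimes>\<^sub>M lborel))"
    by (subst lborel_complex_prod) (simp add: nn_integral_distr)
  also have "\<dots> = (\<integral>\<^sup>+x. \<integral>\<^sup>+y. F (Complex x y) \<partial>lborel \<partial>lborel)"
    by (subst lborel.nn_integral_fst[symmetric]) (auto simp: case_prod_beta)
  finally show ?thesis .
qed



definition Sx :: "real \<Rightarrow> complex \<Rightarrow> complex" where
  "Sx a z = Complex (Re z + a * Im z) (Im z)"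
definition Sy :: "real \<Rightarrow> complex \<Rightarrow> complex" where
  "Sy b z = Complex (Re z) (Im z + b * Re z)"

lemma Sx_meas[measurable]: "Sx a \<in> borel_measurable borel"
proof -
  have "Sx a = (\<lambda>z. complex_of_real (Re z + a * Im z) + \<i> * complex_of_real (Im z))"
    by (auto simp: Sx_def complex_eq_iff fun_eq_iff)
  then show ?thesis by simp
qed

lemma Sy_meas[measurable]: "Sy a \<in> borel_measurable borel"
proof -
  have "Sy a = (\<lambda>z. complex_of_real (Re z) + \<i> * complex_of_real (Im z + a * Re z))"
    by (auto simp: Sy_def complex_eq_iff fun_eq_iff)
  then show ?thesis by simp
qed

lemma nn_integral_Sx:
  fixes F :: "complex \<Rightarrow> ennreal"
  assumes [measurable]: "F \<in> borel_measurable borel"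
  shows "(\<integral>\<^sup>+z. F (Sx a z) \<partial>lborel) = (\<integral>\<^sup>+z. F z \<partial>lborel)"
proof -
  have "(\<integral>\<^sup>+z. F (Sx a z) \<partial>lborel) = (\<integral>\<^sup>+y. \<integral>\<^sup>+x. F (Sx a (Complex x y)) \<partial>lborel \<partial>lborel)"
    by (rule nn_integral_complex_iter) simp
  also have "\<dots> = (\<integral>\<^sup>+y. \<integral>\<^sup>+x. F (Complex x y) \<partial>lborel \<partial>lborel)"
  proof (rule nn_integral_cong)
    fix y :: real
    have m: "(\<lambda>x. F (Complex x y)) \<in> borel_measurable borel"
    proof -
      have "(\<lambda>x. Complex x y) = (\<lambda>x. complex_of_real x + \<i> * complex_of_real y)"
        by (auto simp: complex_eq_iff)
      then show ?thesis using measurable_compose[of "\<lambda>x. Complex x y" borel borel F borel] by simp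
    qed
    show "(\<integral>\<^sup>+x. F (Sx a (Complex x y)) \<partial>lborel) = (\<integral>\<^sup>+x. F (Complex x y) \<partial>lborel)"
      using nn_integral_real_affine[OF m, of 1 "a * y"] by (simp add: Sx_def add.commute)
  qed
  also have "\<dots> = (\<integral>\<^sup>+z. F z \<partial>lborel)"
    by (rule nn_integral_complex_iter[symmetric]) simp
  finally show ?thesis .
qed

lemma nn_integral_Sy:
  fixes F :: "complex \<Rightarrow> ennreal"
  assumes [measurable]: "F \<in> borel_measurable borel"
  shows "(\<integral>\<^sup>+z. F (Sy a z) \<partial>lborel) = (\<integral>\<^sup>+z. F z \<partial>lborel)"
proof -
  have "(\<integral>\<^sup>+z. F (Sy a z) \<partial>lborel) = (\<integral>\<^sup>+x. \<integral>\<^sup>+y. F (Sy a (Complex x y)) \<partial>lborel \<partial>lborel)"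
    by (rule nn_integral_complex_iter') simp
  also have "\<dots> = (\<integral>\<^sup>+x. \<integral>\<^sup>+y. F (Complex x y) \<partial>lborel \<partial>lborel)"
  proof (rule nn_integral_cong)
    fix x :: real
    have m: "(\<lambda>y. F (Complex x y)) \<in> borel_measurable borel"
    proof -
      have "(\<lambda>y. Complex x y) = (\<lambda>y. complex_of_real x + \<i> * complex_of_real y)"
        by (auto simp: complex_eq_iff)
      then show ?thesis using measurable_compose[of "\<lambda>y. Complex x y" borel borel F borel] by simp
    qed
    show "(\<integral>\<^sup>+y. F (Sy a (Complex x y)) \<partial>lborel) = (\<integral>\<^sup>+y. F (Complex x y) \<partial>lborel)"
      using nn_integral_real_affine[OF m, of 1 "a * x"] by (simp add: Sy_def add.commute)
  qed
  also have "\<dots> = (\<integral>\<^sup>+z. F z \<partial>lborel)"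
    by (rule nn_integral_complex_iter'[symmetric]) simp
  finally show ?thesis .
qed

lemma distr_lborel_invariant:
  fixes S :: "complex \<Rightarrow> complex"
  assumes [measurable]: "S \<in> borel_measurable borel"
    and inv: "\<And>F. F \<in> borel_measurable borel \<Longrightarrow> (\<integral>\<^sup>+z. F (S z) \<partial>lborel) = (\<integral>\<^sup>+z. F z \<partial>lborel)"
  shows "distr lborel borel S = lborel"
proof (rule measure_eqI)
  fix A assume A: "A \<in> sets (distr lborel borel S)"
  then have A': "A \<in> sets borel" by simp
  have "emeasure (distr lborel borel S) A = emeasure lborel (S -` A \<inter> space lborel)"
    using A' by (simp add: emeasure_distr)
  also have "\<dots> = (\<integral>\<^sup>+z. indicator (S -` A \<inter> space lborel) z \<partial>lborel)"
    using A' measurable_sets[OF assms(1) A'] by (intro nn_integral_indicator[symmetric]) simp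
  also have "\<dots> = (\<integral>\<^sup>+z. indicator A (S z) \<partial>lborel)"
    by (intro nn_integral_cong) (auto split: split_indicator)
  also have "\<dots> = (\<integral>\<^sup>+z. indicator A z \<partial>lborel)"
    using A' by (intro inv) simp
  also have "\<dots> = emeasure lborel A" using A' by simp
  finally show "emeasure (distr lborel borel S) A = emeasure lborel A" .
qed simp

lemma distr_Sx: "distr lborel borel (Sx a) = lborel"
  by (rule distr_lborel_invariant) (auto intro: nn_integral_Sx)

lemma distr_Sy: "distr lborel borel (Sy a) = lborel"
  by (rule distr_lborel_invariant) (auto intro: nn_integral_Sy)

lemma rot_shear:
  assumes "cos th \<noteq> -1"
  shows "(\<lambda>v. cis th * v) = Sx (- (sin th / (1 + cos th))) \<circ> Sy (sin th) \<circ> Sx (- (sin th / (1 + cos th)))"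
proof -
  define t where "t = sin th / (1 + cos th)"
  define s where "s = sin th"
  have c: "1 + cos th \<noteq> 0" using assms by linarith
  have sc: "s * s = (1 - cos th) * (1 + cos th)" using sin_cos_squared_add[of th]
    by (simp add: s_def algebra_simps power2_eq_square)
  have h1: "t * s = 1 - cos th"
  proof -
    have "t * s = s * s / (1 + cos th)" by (simp add: t_def s_def)
    also have "\<dots> = 1 - cos th" using c sc by (simp add: field_simps)
    finally show ?thesis .
  qed
  have h0: "t * (1 + cos th) = s" using c by (simp add: t_def s_def)
  have h2: "2 * t - s * t * t = s"
  proof -
    have "2 * t - s * t * t = t * (2 - t * s)" by (simp add: algebra_simps)
    also have "\<dots> = t * (1 + cos th)" using h1 by simp
    finally show ?thesis using h0 by simp
  qed
  have e: "Sx (- t) (Sy s (Sx (- t) v)) = cis th * v" for v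
  proof -
    have r: "(Re v - t * Im v) - t * (Im v + s * (Re v - t * Im v)) = Re v * (1 - t * s) - Im v * (2 * t - s * t * t)"
      by (simp add: algebra_simps)
    have i: "Im v + s * (Re v - t * Im v) = Re v * s + Im v * (1 - t * s)"
      by (simp add: algebra_simps)
    have re: "(Re v - t * Im v) - t * (Im v + s * (Re v - t * Im v)) = Re v * cos th - Im v * s"
      using r h1 h2 by simp
    have im: "Im v + s * (Re v - t * Im v) = Re v * s + Im v * cos th"
      using i h1 by simp
    have "Sx (- t) (Sy s (Sx (- t) v)) = Complex ((Re v - t * Im v) - t * (Im v + s * (Re v - t * Im v))) (Im v + s * (Re v - t * Im v))"
      by (simp add: Sx_def Sy_def)
    also have "\<dots> = Complex (Re v * cos th - Im v * s) (Re v * s + Im v * cos th)"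
      using re im by simp
    also have "\<dots> = cis th * v" by (simp add: complex_eq_iff s_def)
    finally show ?thesis .
  qed
  show ?thesis using e by (auto simp: fun_eq_iff t_def s_def)
qed

lemma distr_rot: "distr lborel borel (\<lambda>v. cis th * v) = (lborel :: complex measure)"
proof -
  have one: "distr lborel borel (\<lambda>v. cis a * v) = (lborel :: complex measure)" if "cos a \<noteq> -1" for a
  proof -
    let ?t = "- (sin a / (1 + cos a))"
    have "distr lborel borel (\<lambda>v. cis a * v) = distr lborel borel (Sx ?t \<circ> Sy (sin a) \<circ> Sx ?t)"
      by (subst rot_shear[OF that]) (rule refl)
    also have "\<dots> = distr (distr (distr lborel borel (Sx ?t)) borel (Sy (sin a))) borel (Sx ?t)"
      by (simp add: distr_distr comp_assoc)
    also have "\<dots> = lborel" by (simp add: distr_Sx distr_Sy)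
    finally show ?thesis .
  qed
  show ?thesis
  proof (cases "cos th = -1")
    case False then show ?thesis by (rule one)
  next
    case True
    have "cos (th/2) \<noteq> -1"
    proof
      assume "cos (th/2) = -1"
      then have "cos th = 1" using cos_double_cos[of "th/2"] by simp
      with True show False by simp
    qed
    moreover have "(\<lambda>v. cis th * v) = (\<lambda>v. cis (th/2) * v) \<circ> (\<lambda>v. cis (th/2) * v)"
      by (auto simp: fun_eq_iff cis_mult)
    ultimately have "distr lborel borel (\<lambda>v. cis th * v) = distr lborel borel ((\<lambda>v. cis (th/2) * v) \<circ> (\<lambda>v. cis (th/2) * v))"
      by (simp add: comp_def)
    also have "\<dots> = distr (distr lborel borel (\<lambda>v. cis (th/2) * v)) borel (\<lambda>v. cis (th/2) * v)"
      by (rule distr_distr[symmetric]) auto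
    also have "\<dots> = lborel" using one[OF \<open>cos (th/2) \<noteq> -1\<close>] by simp
    finally show ?thesis .
  qed
qed



lemma circle_mean:
  assumes holg: "g holomorphic_on ball 0 R" and v: "cmod v < R"
  shows "((\<lambda>x. g (cis (2 * pi * x) * v)) has_integral g 0) {0..1}"
proof (cases "v = 0")
  case True
  then show ?thesis using has_integral_const_real[of "g 0" 0 1] by simp
next
  case False
  define r where "r = cmod v"
  have r: "0 < r" using False by (simp add: r_def)
  define u where "u = v / complex_of_real r"
  have u: "cmod u = 1" using r by (simp add: u_def r_def norm_divide)
  define h where "h = (\<lambda>w. g (u * w))"
  have holh: "h holomorphic_on ball 0 R"
    unfolding h_def
    by (rule holomorphic_on_compose_gen[OF _ holg, unfolded o_def]) (auto simp: norm_mult u holomorphic_intros)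
  have rR: "r < R" using v by (simp add: r_def)
  have conth: "continuous_on (cball 0 r) h"
    using holomorphic_on_imp_continuous_on[OF holh] rR
    by (elim continuous_on_subset) auto
  have holh': "h holomorphic_on ball 0 r" using holh rR by (elim holomorphic_on_subset) auto
  have "((\<lambda>\<xi>. h \<xi> / (\<xi> - 0)) has_contour_integral (2 * of_real pi * \<i> * h 0)) (circlepath 0 r)"
    by (rule Cauchy_integral_circlepath[OF conth holh']) (simp add: r)
  then have I: "((\<lambda>x. h (circlepath 0 r x) / (circlepath 0 r x - 0) * vector_derivative (circlepath 0 r) (at x within {0..1}))
       has_integral (2 * of_real pi * \<i> * h 0)) {0..1}"
    by (simp add: has_contour_integral_def)
  have eq: "h (circlepath 0 r x) / (circlepath 0 r x - 0) * vector_derivative (circlepath 0 r) (at x within {0..1})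
      = (2 * of_real pi * \<i>) * g (cis (2 * pi * x) * v)" if "x \<in> {0..1}" for x
  proof -
    have e: "exp (2 * of_real pi * \<i> * complex_of_real x) = cis (2 * pi * x)"
      by (simp add: cis_conv_exp mult_ac)
    have ne: "complex_of_real r * cis (2 * pi * x) \<noteq> 0" using r by simp
    have uv: "u * (complex_of_real r * cis (2 * pi * x)) = cis (2 * pi * x) * v"
      using r by (simp add: u_def)
    have vd: "vector_derivative (circlepath 0 r) (at x within {0..1}) = 2 * pi * \<i> * r * cis (2 * pi * x)"
      using that by (simp add: vector_derivative_circlepath01 e)
    have cp: "circlepath 0 r x = complex_of_real r * cis (2 * pi * x)"
      by (simp add: circlepath e)
    show ?thesis unfolding vd cp h_def uv using ne
      by (simp add: field_simps)
  qed
  have "((\<lambda>x. (2 * of_real pi * \<i>) * g (cis (2 * pi * x) * v)) has_integral (2 * of_real pi * \<i> * h 0)) {0..1}"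
    using I by (rule has_integral_cong[THEN iffD1, rotated]) (metis eq)
  then have "((\<lambda>x. inverse (2 * of_real pi * \<i>) * ((2 * of_real pi * \<i>) * g (cis (2 * pi * x) * v))) has_integral
      inverse (2 * of_real pi * \<i>) * (2 * of_real pi * \<i> * h 0)) {0..1}"
    by (rule has_integral_mult_right)
  moreover have "\<And>c. inverse (2 * of_real pi * \<i>) * ((2 * of_real pi * \<i>) * c) = (c::complex)"
    by (simp add: field_simps)
  ultimately show ?thesis by (simp only: h_def mult_zero_right)
qed



lemma cis_mult_meas[measurable]:
  "(\<lambda>p::real\<times>complex. cis (2 * pi * fst p) * snd p) \<in> borel_measurable (lborel \<Otimes>\<^sub>M lborel)"
proof -
  have "(\<lambda>p::real\<times>complex. cis (2 * pi * fst p) * snd p) \<in> borel_measurable borel"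
    by (intro borel_measurable_continuous_onI continuous_intros)
  then show ?thesis by (simp add: lborel_prod measurable_lborel1)
qed

lemma bounded_on_cball:
  assumes "continuous_on (cball c r) (h :: complex \<Rightarrow> complex)"
  obtains B where "B > 0" "\<And>v. v \<in> cball c r \<Longrightarrow> cmod (h v) \<le> B"
proof -
  have "compact (h ` cball c r)" by (rule compact_continuous_image[OF assms]) simp
  then have "bounded (h ` cball c r)" by (rule compact_imp_bounded)
  then obtain B where "B > 0" "\<forall>y\<in>h ` cball c r. norm y \<le> B" by (auto simp: bounded_pos)
  then show ?thesis using that by auto
qed

lemma ind_meas:
  assumes "continuous_on (ball 0 \<delta>) (g :: complex \<Rightarrow> complex)"
  shows "(\<lambda>v. indicator (ball 0 \<delta>) v *\<^sub>R g v) \<in> borel_measurable borel"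
  by (rule borel_measurable_continuous_on_indicator) (auto intro: assms)

lemma disc_integral_zero:
  assumes holg: "g holomorphic_on ball 0 R" and d: "0 < \<delta>" "\<delta> < R" and g0: "g 0 = 0"
  shows "(\<integral>v. indicator (ball 0 \<delta>) v *\<^sub>R g v \<partial>lborel) = (0::complex)"
proof -
  define G where "G = (\<lambda>v. indicator (ball 0 \<delta>) v *\<^sub>R g v)"
  have contg: "continuous_on (cball 0 \<delta>) g"
    using holomorphic_on_imp_continuous_on[OF holg] d by (elim continuous_on_subset) auto
  have Gm[measurable]: "G \<in> borel_measurable borel" unfolding G_def
    by (rule ind_meas) (use contg in \<open>elim continuous_on_subset; auto\<close>)
  obtain B where B: "B > 0" "\<And>v. v \<in> cball 0 \<delta> \<Longrightarrow> cmod (g v) \<le> B"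
    using bounded_on_cball[OF contg] by blast
  have Gb: "cmod (G v) \<le> B * indicator (ball 0 \<delta>) v" for v
    using B by (auto simp: G_def split: split_indicator)
  define F where "F = (\<lambda>\<theta> v. indicator {0..1::real} \<theta> *\<^sub>R G (cis (2 * pi * \<theta>) * v))"
  have cisv: "cis (2 * pi * \<theta>) * v \<in> ball 0 \<delta> \<longleftrightarrow> v \<in> ball 0 \<delta>" for \<theta> v
    by (simp add: norm_mult)
  have Fm: "(\<lambda>(x, y). F x y) \<in> borel_measurable (lborel \<Otimes>\<^sub>M lborel)"
  proof -
    have "(\<lambda>(x, y). F x y) = (\<lambda>p. indicator {0..1::real} (fst p) *\<^sub>R G (cis (2 * pi * fst p) * snd p))"
      by (auto simp: F_def fun_eq_iff)
    also have "\<dots> \<in> borel_measurable (lborel \<Otimes>\<^sub>M lborel)"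
      by measurable
    finally show ?thesis .
  qed
  have Fint: "integrable (lborel \<Otimes>\<^sub>M lborel) (\<lambda>(x, y). F x y)"
  proof (rule Bochner_Integration.integrable_bound[OF _ Fm])
    have fin: "emeasure (lborel \<Otimes>\<^sub>M lborel) ({0..1::real} \<times> ball (0::complex) \<delta>) < \<infinity>"
      using emeasure_lborel_ball_finite[of "0::complex" \<delta>]
      by (simp add: lborel.emeasure_pair_measure_Times ennreal_mult_less_top top_unique)
    show "integrable (lborel \<Otimes>\<^sub>M lborel) (\<lambda>p. B * indicator ({0..1::real} \<times> ball (0::complex) \<delta>) p)"
      using fin by (intro integrable_mult_right) (simp add: integrable_indicator_iff)
    show "AE p in lborel \<Otimes>\<^sub>M lborel. norm ((\<lambda>(x, y). F x y) p) \<le> norm (B * indicator ({0..1::real} \<times> ball (0::complex) \<delta>) p)"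
    proof (rule AE_I2)
      fix p :: "real \<times> complex"
      obtain x y where p: "p = (x, y)" by (cases p)
      have "cmod (F x y) \<le> B * indicator ({0..1::real} \<times> ball (0::complex) \<delta>) (x, y)"
        using B(1) B(2)[of "cis (2 * pi * x) * y"] by (auto simp: F_def G_def norm_mult split: split_indicator)
      then show "norm ((\<lambda>(x, y). F x y) p) \<le> norm (B * indicator ({0..1::real} \<times> ball (0::complex) \<delta>) p)"
        using B(1) by (simp add: p)
    qed
  qed
  have "(\<integral>y. \<integral>x. F x y \<partial>lborel \<partial>lborel) = (\<integral>x. \<integral>y. F x y \<partial>lborel \<partial>lborel)"
    by (rule lborel_pair.Fubini_integral[OF Fint])
  moreover have "(\<integral>x. \<integral>y. F x y \<partial>lborel \<partial>lborel) = (\<integral>v. G v \<partial>lborel)"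
  proof -
    have "(\<integral>y. F x y \<partial>lborel) = indicator {0..1::real} x *\<^sub>R (\<integral>v. G v \<partial>lborel)" for x
    proof -
      have "(\<integral>y. G (cis (2 * pi * x) * y) \<partial>lborel) = (\<integral>v. G v \<partial>distr lborel borel (\<lambda>v. cis (2 * pi * x) * v))"
        by (rule integral_distr[symmetric]) auto
      then have "(\<integral>y. G (cis (2 * pi * x) * y) \<partial>lborel) = (\<integral>v. G v \<partial>lborel)"
        by (simp add: distr_rot)
      then show ?thesis by (simp add: F_def)
    qed
    then have "(\<integral>x. \<integral>y. F x y \<partial>lborel \<partial>lborel) = (\<integral>x. indicator {0..1::real} x *\<^sub>R (\<integral>v. G v \<partial>lborel) \<partial>lborel)"
      by simp
    also have "\<dots> = (\<integral>v. G v \<partial>lborel)"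
      by simp
    finally show ?thesis .
  qed
  moreover have "(\<integral>y. \<integral>x. F x y \<partial>lborel \<partial>lborel) = 0"
  proof -
    have "(\<integral>x. F x y \<partial>lborel) = 0" for y
    proof (cases "y \<in> ball 0 \<delta>")
      case False
      then have "F x y = 0" for x by (simp add: F_def G_def norm_mult)
      then show ?thesis by simp
    next
      case True
      have yR: "cmod y < R" using True d by simp
      have cont: "continuous_on {0..1} (\<lambda>x. g (cis (2 * pi * x) * y))"
        using True
        by (intro continuous_on_compose2[OF contg] continuous_intros) (auto simp: norm_mult)
      have si: "set_integrable lborel {0..1} (\<lambda>x. g (cis (2 * pi * x) * y))"
        unfolding set_integrable_def by (rule borel_integrable_compact[OF _ cont]) simp
      have "(\<integral>x. F x y \<partial>lborel) = (\<integral>x. indicator {0..1::real} x *\<^sub>R g (cis (2 * pi * x) * y) \<partial>lborel)"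
        using True by (intro Bochner_Integration.integral_cong) (auto simp: F_def G_def norm_mult split: split_indicator)
      also have "\<dots> = set_lebesgue_integral lborel {0..1} (\<lambda>x. g (cis (2 * pi * x) * y))"
        by (simp add: set_lebesgue_integral_def)
      also have "\<dots> = integral {0..1} (\<lambda>x. g (cis (2 * pi * x) * y))"
        by (rule set_borel_integral_eq_integral(2)[OF si])
      also have "\<dots> = g 0"
        using circle_mean[OF holg yR] by (rule integral_unique)
      finally show ?thesis using g0 by simp
    qed
    then show ?thesis by simp
  qed
  ultimately show ?thesis by (simp add: G_def)
qed



lemma measure_ball_complex: "r \<ge> 0 \<Longrightarrow> measure lborel (ball (c::complex) r) = pi * r^2"
  using emeasure_ball[of r c] by (simp add: measure_def unit_ball_vol_2)

lemma cmod_add_sq: "(cmod (a + w))^2 = (cmod a)^2 + 2 * Re (cnj a * w) + (cmod w)^2"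
  unfolding cmod_power2 by (simp add: algebra_simps power2_eq_square)

lemma sub_mean:
  assumes holh: "h holomorphic_on ball 0 R" and d: "0 < \<delta>" "\<delta> < R"
  shows "ennreal ((cmod (h 0))^2 * (pi * \<delta>^2)) \<le> (\<integral>\<^sup>+v. ennreal ((cmod (h v))^2) * indicator (ball 0 \<delta>) v \<partial>lborel)"
proof -
  define a where "a = h 0"
  define g where "g = (\<lambda>v. h v - a)"
  define D where "D = ball (0::complex) \<delta>"
  have holg: "g holomorphic_on ball 0 R" unfolding g_def by (intro holomorphic_intros holh)
  have g0: "g 0 = 0" by (simp add: g_def a_def)
  have conth: "continuous_on (cball 0 \<delta>) h"
    using holomorphic_on_imp_continuous_on[OF holh] d by (elim continuous_on_subset) auto
  have contg: "continuous_on (cball 0 \<delta>) g"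
    using holomorphic_on_imp_continuous_on[OF holg] d by (elim continuous_on_subset) auto
  obtain B where B: "B > 0" "\<And>v. v \<in> cball 0 \<delta> \<Longrightarrow> cmod (h v) \<le> B"
    using bounded_on_cball[OF conth] by blast
  obtain Bg where Bg: "Bg > 0" "\<And>v. v \<in> cball 0 \<delta> \<Longrightarrow> cmod (g v) \<le> Bg"
    using bounded_on_cball[OF contg] by blast
  have Dfin: "emeasure lborel D < \<infinity>" unfolding D_def by (rule emeasure_lborel_ball_finite)
  have intD: "integrable lborel (indicator D :: complex \<Rightarrow> real)"
    using Dfin by (simp add: integrable_indicator_iff D_def)
  define P where "P = (\<lambda>v. indicator D v * (cmod (h v))^2)"
  define G where "G = (\<lambda>v. indicator D v *\<^sub>R g v)"
  have Pm: "P \<in> borel_measurable borel"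
  proof -
    have "(\<lambda>v. indicator D v *\<^sub>R (cmod (h v))^2) \<in> borel_measurable borel"
      unfolding D_def
      by (rule borel_measurable_continuous_on_indicator)
         (auto intro!: continuous_intros continuous_on_subset[OF conth])
    then show ?thesis by (simp add: P_def)
  qed
  have Gm: "G \<in> borel_measurable borel"
    unfolding G_def D_def by (rule ind_meas) (use contg in \<open>elim continuous_on_subset; auto\<close>)
  have Pm': "P \<in> borel_measurable lborel" using Pm by (simp add: measurable_lborel1)
  have Gm': "G \<in> borel_measurable lborel" using Gm by (simp add: measurable_lborel1)
  have Pint: "integrable lborel P"
  proof (rule Bochner_Integration.integrable_bound[OF _ Pm'])
    show "integrable lborel (\<lambda>v. B^2 * indicator D v)" using intD by simp
    show "AE x in lborel. norm (P x) \<le> norm (B^2 * indicator D x)"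
    proof (rule AE_I2)
      fix v
      show "norm (P v) \<le> norm (B^2 * indicator D v)"
        using B(2)[of v] by (auto simp: P_def D_def split: split_indicator intro!: power_mono)
    qed
  qed
  have Gint: "integrable lborel G"
  proof (rule Bochner_Integration.integrable_bound[OF _ Gm'])
    show "integrable lborel (\<lambda>v. Bg * indicator D v)" using intD by simp
    show "AE x in lborel. norm (G x) \<le> norm (Bg * indicator D x)"
    proof (rule AE_I2)
      fix v
      show "norm (G v) \<le> norm (Bg * indicator D v)"
        using Bg(2)[of v] Bg(1) by (auto simp: G_def D_def split: split_indicator)
    qed
  qed
  have G0: "(\<integral>v. G v \<partial>lborel) = 0"
    unfolding G_def D_def by (rule disc_integral_zero[OF holg d g0])
  define Q where "Q = (\<lambda>v. (cmod a)^2 * indicator D v + 2 * Re (cnj a * G v))"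
  have intcG: "integrable lborel (\<lambda>v. cnj a * G v)" using Gint by simp
  have intRe: "integrable lborel (\<lambda>v. Re (cnj a * G v))" using intcG by (rule integrable_Re)
  have Qint: "integrable lborel Q" unfolding Q_def
    by (intro Bochner_Integration.integrable_add integrable_mult_right intD intRe)
  have "(\<integral>v. Q v \<partial>lborel) = (cmod a)^2 * measure lborel D + 2 * Re (cnj a * (\<integral>v. G v \<partial>lborel))"
  proof -
    have "(\<integral>v. Q v \<partial>lborel) = (\<integral>v. (cmod a)^2 * indicator D v \<partial>lborel) + (\<integral>v. 2 * Re (cnj a * G v) \<partial>lborel)"
      unfolding Q_def by (rule Bochner_Integration.integral_add) (intro integrable_mult_right intD intRe)+
    also have "\<dots> = (cmod a)^2 * (\<integral>v. indicator D v \<partial>lborel) + 2 * (\<integral>v. Re (cnj a * G v) \<partial>lborel)"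
      by (simp only: integral_mult_right_zero)
    also have "(\<integral>v. Re (cnj a * G v) \<partial>lborel) = Re (\<integral>v. cnj a * G v \<partial>lborel)"
      by (rule integral_Re[OF intcG])
    also have "(\<integral>v. cnj a * G v \<partial>lborel) = cnj a * (\<integral>v. G v \<partial>lborel)"
      by simp
    also have "(\<integral>v. indicator D v \<partial>lborel) = measure lborel D"
      using Dfin by (simp add: D_def)
    finally show ?thesis .
  qed
  also have "\<dots> = (cmod a)^2 * (pi * \<delta>^2)"
    using G0 d by (simp add: D_def measure_ball_complex)
  finally have IQ: "(\<integral>v. Q v \<partial>lborel) = (cmod a)^2 * (pi * \<delta>^2)" .
  have QP: "Q v \<le> P v" for v
  proof (cases "v \<in> D")
    case True
    have "(cmod (h v))^2 = (cmod (a + g v))^2" by (simp add: g_def)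
    also have "\<dots> = (cmod a)^2 + 2 * Re (cnj a * g v) + (cmod (g v))^2" by (rule cmod_add_sq)
    finally show ?thesis using True by (simp add: Q_def P_def G_def)
  next
    case False
    then show ?thesis by (simp add: Q_def P_def G_def)
  qed
  have "(cmod a)^2 * (pi * \<delta>^2) \<le> (\<integral>v. P v \<partial>lborel)"
    using IQ integral_mono[OF Qint Pint QP] by simp
  then have "ennreal ((cmod a)^2 * (pi * \<delta>^2)) \<le> ennreal (\<integral>v. P v \<partial>lborel)"
    by (rule ennreal_leI)
  also have "ennreal (\<integral>v. P v \<partial>lborel) = (\<integral>\<^sup>+v. ennreal (P v) \<partial>lborel)"
    by (rule nn_integral_eq_integral[symmetric, OF Pint]) (auto simp: P_def)
  also have "\<dots> = (\<integral>\<^sup>+v. ennreal ((cmod (h v))^2) * indicator (ball 0 \<delta>) v \<partial>lborel)"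
    by (intro nn_integral_cong) (auto simp: P_def D_def split: split_indicator)
  finally show ?thesis by (simp add: a_def)
qed



lemma ind_cball_meas[measurable]: "(indicator (cball (0::complex) 1) :: complex \<Rightarrow> ennreal) \<in> borel_measurable borel"
  by (rule borel_measurable_indicator) simp

lemma cmod_vimage_meas[measurable]: "cmod -` {..x} \<in> sets borel"
proof -
  have "cmod -` {..x} = {z. cmod z \<le> x}" by auto
  also have "closed \<dots>" by (intro closed_Collect_le continuous_intros)
  then have "{z::complex. cmod z \<le> x} \<in> sets borel" by (rule borel_closed)
  finally show ?thesis .
qed

definition mu1 :: "real measure" where
  "mu1 = distr (density lborel (indicator (cball (0::complex) 1))) borel cmod"
definition mu2 :: "real measure" where
  "mu2 = density lborel (\<lambda>r. ennreal (2 * pi * r) * indicator {0..1} r)"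

lemma mu1_atMost: "emeasure mu1 {..x} = ennreal (pi * (min (max x 0) 1)^2)"
proof -
  have "emeasure mu1 {..x} = emeasure (density lborel (indicator (cball (0::complex) 1))) (cmod -` {..x})"
    unfolding mu1_def by (subst emeasure_distr) auto
  also have "\<dots> = (\<integral>\<^sup>+z. indicator (cball (0::complex) 1) z * indicator (cmod -` {..x}) z \<partial>lborel)"
    by (subst emeasure_density) auto
  also have "\<dots> = (\<integral>\<^sup>+z. indicator (cball (0::complex) 1 \<inter> {z. cmod z \<le> x}) z \<partial>lborel)"
    by (intro nn_integral_cong) (auto split: split_indicator)
  also have "\<dots> = emeasure lborel (cball (0::complex) 1 \<inter> {z. cmod z \<le> x})"
    by (rule nn_integral_indicator) auto
  also have "\<dots> = ennreal (pi * (min (max x 0) 1)^2)"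
  proof (cases "x < 0")
    case True
    then have "cball (0::complex) 1 \<inter> {z. cmod z \<le> x} = {}" by auto (smt (verit) norm_ge_zero)
    then show ?thesis using True by simp
  next
    case False
    then have "cball (0::complex) 1 \<inter> {z. cmod z \<le> x} = cball 0 (min (max x 0) 1)" by auto
    moreover have "emeasure lborel (cball (0::complex) (min (max x 0) 1)) = ennreal (pi * (min (max x 0) 1)^2)"
      using emeasure_cball[of "min (max x 0) 1" "0::complex"] by (simp add: unit_ball_vol_2)
    ultimately show ?thesis by simp
  qed
  finally show ?thesis .
qed

lemma mu2_atMost: "emeasure mu2 {..x} = ennreal (pi * (min (max x 0) 1)^2)"
proof -
  have "emeasure mu2 {..x} = (\<integral>\<^sup>+r. ennreal (2 * pi * r) * indicator {0..1} r * indicator {..x} r \<partial>lborel)"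
    unfolding mu2_def by (subst emeasure_density) auto
  also have "\<dots> = ennreal (pi * (min (max x 0) 1)^2)"
  proof (cases "x < 0")
    case True
    then have z: "\<And>r. ennreal (2 * pi * r) * indicator {0..1} r * indicator {..x} r = 0"
      by (auto split: split_indicator)
    have "(\<integral>\<^sup>+r. ennreal (2 * pi * r) * indicator {0..1} r * indicator {..x} r \<partial>lborel) = (\<integral>\<^sup>+(r::real). 0 \<partial>lborel)"
      by (rule nn_integral_cong) (rule z)
    then show ?thesis using True by simp
  next
    case False
    define m where "m = min (max x 0) 1"
    have m: "0 \<le> m" by (simp add: m_def)
    have "(\<integral>\<^sup>+r. ennreal (2 * pi * r) * indicator {0..1} r * indicator {..x} r \<partial>lborel)
        = (\<integral>\<^sup>+r\<in>{0..m}. ennreal (2 * pi * r) \<partial>lborel)"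
      using False by (intro nn_integral_cong) (auto simp: m_def split: split_indicator)
    also have "\<dots> = ennreal (pi * m^2 - pi * 0^2)"
      by (rule nn_integral_FTC_Icc) (auto intro!: derivative_eq_intros simp: m)
    finally show ?thesis by (simp add: m_def)
  qed
  finally show ?thesis .
qed

lemma mu1_eq_mu2: "mu1 = mu2"
proof (rule cdf_unique')
  have f1: "emeasure mu1 (space mu1) \<noteq> \<infinity>"
  proof -
    have "emeasure mu1 (space mu1) = emeasure (density lborel (indicator (cball (0::complex) 1))) (cmod -` UNIV)"
      unfolding mu1_def by (subst emeasure_distr) auto
    also have "\<dots> = emeasure lborel (cball (0::complex) 1)"
      by (subst emeasure_density) auto
    finally show ?thesis using emeasure_cball[of 1 "0::complex"] by simp
  qed
  show "finite_borel_measure mu1"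
    unfolding finite_borel_measure_def finite_borel_measure_axioms_def
    using f1 by (auto simp: mu1_def intro: finite_measureI)
  have f2: "emeasure mu2 (space mu2) \<noteq> \<infinity>"
  proof -
    have "emeasure mu2 (space mu2) = (\<integral>\<^sup>+r. ennreal (2 * pi * r) * indicator {0..1} r \<partial>lborel)"
      unfolding mu2_def by (subst emeasure_density) auto
    also have "\<dots> = ennreal (pi * 1^2 - pi * 0^2)"
      by (rule nn_integral_FTC_Icc) (auto intro!: derivative_eq_intros)
    finally show ?thesis by simp
  qed
  show "finite_borel_measure mu2"
    unfolding finite_borel_measure_def finite_borel_measure_axioms_def
    using f2 by (auto simp: mu2_def intro: finite_measureI)
  show "cdf mu1 = cdf mu2"
    by (auto simp: fun_eq_iff cdf_def measure_def mu1_atMost mu2_atMost)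
qed

lemma disc_radial_finite:
  fixes \<omega> :: "real \<Rightarrow> real"
  assumes si: "set_integrable lborel {0..<1} \<omega>" and c: "continuous_on {0..<1} \<omega>"
    and pos: "\<forall>r\<in>{0..<1}. \<omega> r > 0"
  shows "(\<integral>\<^sup>+z. ennreal (\<omega> (cmod z)) * indicator (ball 0 1) z \<partial>lborel) < \<infinity>"
proof -
  define W where "W = (\<lambda>r. ennreal (indicator {0..<1} r *\<^sub>R \<omega> r))"
  have Wm[measurable]: "W \<in> borel_measurable borel"
  proof -
    have "(\<lambda>r. indicator {0..<1} r *\<^sub>R \<omega> r) \<in> borel_measurable borel"
      by (rule borel_measurable_continuous_on_indicator) (auto intro: c)
    then show ?thesis unfolding W_def by measurable
  qed
  have "(\<integral>\<^sup>+z. ennreal (\<omega> (cmod z)) * indicator (ball 0 1) z \<partial>lborel)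
      \<le> (\<integral>\<^sup>+z. indicator (cball (0::complex) 1) z * W (cmod z) \<partial>lborel)"
    by (intro nn_integral_mono) (auto simp: W_def split: split_indicator)
  also have "\<dots> = (\<integral>\<^sup>+z. W (cmod z) \<partial>density lborel (indicator (cball (0::complex) 1)))"
    by (subst nn_integral_density) auto
  also have "\<dots> = (\<integral>\<^sup>+r. W r \<partial>mu1)"
    unfolding mu1_def by (subst nn_integral_distr) auto
  also have "\<dots> = (\<integral>\<^sup>+r. W r \<partial>mu2)" by (simp add: mu1_eq_mu2)
  also have "\<dots> = (\<integral>\<^sup>+r. ennreal (2 * pi * r) * indicator {0..1} r * W r \<partial>lborel)"
    unfolding mu2_def by (subst nn_integral_density) auto
  also have "\<dots> \<le> (\<integral>\<^sup>+r. ennreal (2 * pi) * W r \<partial>lborel)"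
  proof (intro nn_integral_mono)
    fix r :: real
    show "ennreal (2 * pi * r) * indicator {0..1} r * W r \<le> ennreal (2 * pi) * W r"
    proof (cases "r \<in> {0..1}")
      case True
      then have "ennreal (2 * pi * r) \<le> ennreal (2 * pi)" by (intro ennreal_leI) auto
      then show ?thesis using True by (auto intro: mult_right_mono)
    next
      case False then show ?thesis by simp
    qed
  qed
  also have "\<dots> = ennreal (2 * pi) * (\<integral>\<^sup>+r. W r \<partial>lborel)"
    by (rule nn_integral_cmult) simp
  also have "\<dots> < \<infinity>"
  proof -
    have "(\<integral>\<^sup>+r. W r \<partial>lborel) \<noteq> \<infinity>"
      using si unfolding set_integrable_def W_def by (rule integrableD(2))
    then show ?thesis by (simp add: ennreal_mult_less_top less_top)
  qed
  finally show ?thesis .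
qed



lemma ennreal_div_le1: "0 < (c::real) \<Longrightarrow> J / ennreal c \<le> 1 \<Longrightarrow> J \<le> ennreal c"
  by (metis divide_eq_1_ennreal divide_right_mono_ennreal
    ennreal_eq_zero_iff ennreal_neq_top linorder_le_cases
    order.strict_iff_not order.strict_iff_order)

lemma unit_ball_facts:
  assumes "inH \<omega> f" "Hnorm \<omega> f \<le> 1"
  shows "cmod (f 0) \<le> 1"
    and "(\<integral>\<^sup>+ z. ennreal ((cmod (deriv f z))\<^sup>2 * \<omega> (cmod z)) * indicator (ball 0 1) z \<partial>lborel) \<le> ennreal pi"
proof -
  define J where "J = (\<integral>\<^sup>+ z. ennreal ((cmod (deriv f z))\<^sup>2 * \<omega> (cmod z)) * indicator (ball 0 1) z \<partial>lborel)"
  have H: "Hnorm2 \<omega> f = ennreal ((cmod (f 0))\<^sup>2) + J / ennreal pi"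
    by (simp add: Hnorm2_def J_def)
  have fin: "Hnorm2 \<omega> f < \<infinity>" using assms(1) by (simp add: inH_def)
  have "sqrt (enn2real (Hnorm2 \<omega> f)) \<le> 1" using assms(2) by (simp add: Hnorm_def)
  then have "enn2real (Hnorm2 \<omega> f) \<le> 1" by simp
  then have "ennreal (enn2real (Hnorm2 \<omega> f)) \<le> ennreal 1" by (rule ennreal_leI)
  then have le1: "Hnorm2 \<omega> f \<le> 1"
    using ennreal_enn2real[of "Hnorm2 \<omega> f"] fin by simp
  have "ennreal ((cmod (f 0))\<^sup>2) \<le> Hnorm2 \<omega> f" unfolding H by simp
  then have "ennreal ((cmod (f 0))\<^sup>2) \<le> 1" using le1 by (rule order.trans)
  then have "(cmod (f 0))\<^sup>2 \<le> 1" by (simp add: ennreal_le_1)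
  then show "cmod (f 0) \<le> 1" by (simp add: power_le_one_iff abs_le_square_iff)
  have "J / ennreal pi \<le> Hnorm2 \<omega> f" unfolding H by simp
  then have "J / ennreal pi \<le> 1" using le1 by (rule order.trans)
  then show "J \<le> ennreal pi" by (intro ennreal_div_le1) auto
qed



lemma weight_cont_comp:
  assumes "weight \<omega>" and "h holomorphic_on ball 0 1"
  shows "continuous_on (ball 0 1) (\<lambda>z. (cmod (h z))\<^sup>2 * \<omega> (cmod z))"
proof -
  have c: "continuous_on {0..<1} \<omega>" using assms(1) by (simp add: weight_def)
  have ch: "continuous_on (ball 0 1) h" by (rule holomorphic_on_imp_continuous_on[OF assms(2)])
  have "continuous_on (ball 0 1) (\<lambda>z. \<omega> (cmod z))"
    by (rule continuous_on_compose2[OF c]) (auto intro: continuous_intros)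
  then show ?thesis by (intro continuous_intros ch)
qed

lemma J_meas:
  assumes "weight \<omega>" and "h holomorphic_on ball 0 1"
  shows "(\<lambda>z. ennreal ((cmod (h z))\<^sup>2 * \<omega> (cmod z)) * indicator (ball 0 1) z) \<in> borel_measurable borel"
proof -
  have "(\<lambda>z. indicator (ball 0 1) z *\<^sub>R ((cmod (h z))\<^sup>2 * \<omega> (cmod z))) \<in> borel_measurable borel"
    by (rule borel_measurable_continuous_on_indicator) (auto intro: weight_cont_comp[OF assms])
  then have "(\<lambda>z. ennreal (indicator (ball 0 1) z *\<^sub>R ((cmod (h z))\<^sup>2 * \<omega> (cmod z)))) \<in> borel_measurable borel"
    by measurable
  moreover have "(\<lambda>z. ennreal (indicator (ball 0 1) z *\<^sub>R ((cmod (h z))\<^sup>2 * \<omega> (cmod z)))) =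
      (\<lambda>z. ennreal ((cmod (h z))\<^sup>2 * \<omega> (cmod z)) * indicator (ball 0 1) z)"
    by (auto simp: fun_eq_iff split: split_indicator)
  ultimately show ?thesis by simp
qed

lemma dist_cmod_lt: "dist u z < \<delta> \<Longrightarrow> cmod z < cmod u + (\<delta>::real)"
proof -
  assume a: "dist u z < \<delta>"
  have "cmod z - cmod u \<le> cmod (z - u)" by (rule norm_triangle_ineq2)
  moreover have "cmod (z - u) = dist u z" by (simp add: dist_norm norm_minus_commute)
  ultimately show ?thesis using a by linarith
qed

lemma deriv_bound_pt:
  assumes w: "weight \<omega>" and hol: "f holomorphic_on ball 0 1"
    and J: "(\<integral>\<^sup>+ z. ennreal ((cmod (deriv f z))\<^sup>2 * \<omega> (cmod z)) * indicator (ball 0 1) z \<partial>lborel) \<le> ennreal pi"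
    and m: "m > 0" "\<And>r. 0 \<le> r \<Longrightarrow> r \<le> R1 \<Longrightarrow> m \<le> \<omega> r"
    and u: "cmod u + \<delta> \<le> R1" "R1 < 1" "\<delta> > 0"
  shows "(cmod (deriv f u))\<^sup>2 * (pi * \<delta>\<^sup>2) \<le> pi / m"
proof -
  define h where "h = deriv f"
  have holh: "h holomorphic_on ball 0 1" unfolding h_def by (rule holomorphic_deriv[OF hol]) simp
  have holhu: "(\<lambda>v. h (u + v)) holomorphic_on ball 0 (1 - cmod u)"
  proof -
    have "(\<lambda>v. u + v) ` ball 0 (1 - cmod u) \<subseteq> ball 0 1"
    proof clarify
      fix v :: complex assume "v \<in> ball 0 (1 - cmod u)"
      then have "cmod v < 1 - cmod u" by simp
      moreover have "cmod (u + v) \<le> cmod u + cmod v" by (rule norm_triangle_ineq)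
      ultimately show "u + v \<in> ball 0 1" by simp
    qed
    then show ?thesis
      by (intro holomorphic_on_compose_gen[OF _ holh, unfolded o_def]) (auto intro!: holomorphic_intros)
  qed
  have d1: "\<delta> < 1 - cmod u" using u by simp
  have SM: "ennreal ((cmod (h u))^2 * (pi * \<delta>^2)) \<le> (\<integral>\<^sup>+v. ennreal ((cmod (h (u + v)))^2) * indicator (ball 0 \<delta>) v \<partial>lborel)"
    using sub_mean[OF holhu u(3) d1] by simp
  define F where "F = (\<lambda>z. ennreal (indicator (ball u \<delta>) z *\<^sub>R (cmod (h z))^2))"
  have Fm: "F \<in> borel_measurable borel"
  proof -
    have sub: "ball u \<delta> \<subseteq> ball 0 1"
      using u dist_cmod_lt[of u _ \<delta>] by fastforce
    have "continuous_on (ball u \<delta>) (\<lambda>z. (cmod (h z))^2)"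
      using holomorphic_on_imp_continuous_on[OF holh] sub
      by (intro continuous_intros) (auto elim: continuous_on_subset)
    then have "(\<lambda>z. indicator (ball u \<delta>) z *\<^sub>R (cmod (h z))^2) \<in> borel_measurable borel"
      by (intro borel_measurable_continuous_on_indicator) auto
    then show ?thesis unfolding F_def by measurable
  qed
  have "(\<integral>\<^sup>+v. ennreal ((cmod (h (u + v)))^2) * indicator (ball 0 \<delta>) v \<partial>lborel) = (\<integral>\<^sup>+v. F (u + v) \<partial>lborel)"
    by (intro nn_integral_cong) (auto simp: F_def dist_norm split: split_indicator)
  also have "\<dots> = (\<integral>\<^sup>+z. F z \<partial>distr lborel borel ((+) u))"
    using Fm by (subst nn_integral_distr) auto
  also have "\<dots> = (\<integral>\<^sup>+z. F z \<partial>lborel)" by (simp add: lborel_distr_plus)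
  also have "\<dots> \<le> (\<integral>\<^sup>+z. ennreal (1/m) * (ennreal ((cmod (h z))\<^sup>2 * \<omega> (cmod z)) * indicator (ball 0 1) z) \<partial>lborel)"
  proof (intro nn_integral_mono)
    fix z
    show "F z \<le> ennreal (1/m) * (ennreal ((cmod (h z))\<^sup>2 * \<omega> (cmod z)) * indicator (ball 0 1) z)"
    proof (cases "z \<in> ball u \<delta>")
      case True
      have nz: "cmod z < R1" using True u dist_cmod_lt[of u z \<delta>] by simp
      then have z1: "z \<in> ball 0 1" using u by simp
      have "m \<le> \<omega> (cmod z)" using m(2)[of "cmod z"] nz by simp
      then have "(cmod (h z))^2 * m \<le> (cmod (h z))\<^sup>2 * \<omega> (cmod z)"
        by (intro mult_left_mono) auto
      then have "(cmod (h z))^2 \<le> 1/m * ((cmod (h z))\<^sup>2 * \<omega> (cmod z))"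
        using m(1) by (simp add: divide_simps)
      then have "ennreal ((cmod (h z))^2) \<le> ennreal (1/m * ((cmod (h z))\<^sup>2 * \<omega> (cmod z)))"
        by (rule ennreal_leI)
      also have "\<dots> = ennreal (1/m) * ennreal ((cmod (h z))\<^sup>2 * \<omega> (cmod z))"
        using m(1) \<open>m \<le> \<omega> (cmod z)\<close> by (intro ennreal_mult) auto
      finally show ?thesis using True z1 by (simp add: F_def)
    next
      case False
      then show ?thesis by (simp add: F_def)
    qed
  qed
  also have "\<dots> = ennreal (1/m) * (\<integral>\<^sup>+z. ennreal ((cmod (h z))\<^sup>2 * \<omega> (cmod z)) * indicator (ball 0 1) z \<partial>lborel)"
    by (rule nn_integral_cmult) (simp add: J_meas[OF w holh] measurable_lborel1)
  also have "\<dots> \<le> ennreal (1/m) * ennreal pi"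
    using J unfolding h_def by (intro mult_left_mono) auto
  also have "\<dots> = ennreal (pi / m)" using m(1) by (simp add: ennreal_mult[symmetric])
  finally have "ennreal ((cmod (h u))^2 * (pi * \<delta>^2)) \<le> ennreal (pi / m)" using SM by (rule order.trans[rotated])
  moreover have "0 \<le> pi / m" using m(1) by simp
  ultimately show ?thesis unfolding h_def by (simp only: ennreal_le_iff)
qed

lemma uniform_bound:
  assumes w: "weight \<omega>" and s: "0 < s0" "s0 < 1"
  obtains M where "M > 0" "\<And>f w. inH \<omega> f \<Longrightarrow> Hnorm \<omega> f \<le> 1 \<Longrightarrow> cmod w \<le> s0 \<Longrightarrow> cmod (f w) \<le> M"
proof -
  define R1 where "R1 = (1 + s0) / 2"
  define \<delta> where "\<delta> = (1 - s0) / 2"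
  have R1: "0 < R1" "R1 < 1" using s by (auto simp: R1_def)
  have d: "\<delta> > 0" using s by (simp add: \<delta>_def)
  have c: "continuous_on {0..<1} \<omega>" and pos: "\<forall>r\<in>{0..<1}. \<omega> r > 0" using w by (auto simp: weight_def)
  have "continuous_on {0..R1} \<omega>" using c R1 by (elim continuous_on_subset) auto
  then obtain x0 where x0: "x0 \<in> {0..R1}" "\<And>y. y \<in> {0..R1} \<Longrightarrow> \<omega> x0 \<le> \<omega> y"
    using continuous_attains_inf[of "{0..R1}" \<omega>] R1 by auto
  define m where "m = \<omega> x0"
  have m: "m > 0" using pos x0(1) R1 by (auto simp: m_def)
  have m2: "\<And>r. 0 \<le> r \<Longrightarrow> r \<le> R1 \<Longrightarrow> m \<le> \<omega> r" using x0(2) by (auto simp: m_def)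
  define C1 where "C1 = sqrt (1 / (m * \<delta>^2))"
  have C1: "C1 \<ge> 0" unfolding C1_def using m d by simp
  show ?thesis
  proof (rule that[of "1 + C1"])
    show "0 < 1 + C1" using C1 by simp
    fix f w assume f: "inH \<omega> f" "Hnorm \<omega> f \<le> 1" and wn: "cmod w \<le> s0"
    have hol: "f holomorphic_on ball 0 1" using f(1) by (simp add: inH_def)
    note uf = unit_ball_facts[OF f]
    have db: "cmod (deriv f z) \<le> C1" if "z \<in> cball 0 s0" for z
    proof -
      have "cmod z + \<delta> \<le> R1" using that by (simp add: R1_def \<delta>_def field_simps)
      from deriv_bound_pt[OF w hol uf(2) m m2 this R1(2) d]
      have "(cmod (deriv f z))\<^sup>2 * (pi * \<delta>\<^sup>2) \<le> pi / m" .
      have mdpos: "0 < m * \<delta>^2" using m d by simp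
      then have "(cmod (deriv f z))\<^sup>2 * (m * \<delta>^2) \<le> 1"
        using m d \<open>(cmod (deriv f z))\<^sup>2 * (pi * \<delta>\<^sup>2) \<le> pi / m\<close> by (simp add: field_simps)
      then have "(cmod (deriv f z))\<^sup>2 \<le> 1 / (m * \<delta>^2)"
        using mdpos by (simp add: field_simps)
      then show ?thesis unfolding C1_def by (rule real_le_rsqrt)
    qed
    have "cmod (f w - f 0) \<le> C1 * cmod (w - 0)"
    proof (rule field_differentiable_bound[of "cball 0 s0" f "deriv f"])
      show "convex (cball (0::complex) s0)" by simp
      show "(f has_field_derivative deriv f z) (at z within cball 0 s0)" if "z \<in> cball 0 s0" for z
        using that s by (intro holomorphic_derivI[OF hol]) auto
    qed (use db wn s in auto)
    also have "\<dots> \<le> C1 * 1" using C1 wn s by (intro mult_left_mono) auto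
    finally have "cmod (f w - f 0) \<le> C1" by simp
    then show "cmod (f w) \<le> 1 + C1" using uf(1) norm_triangle_ineq2[of "f w" "f 0"] by linarith
  qed
qed



lemma taylor_coeff_bound:
  assumes hol: "f holomorphic_on ball 0 1" and s: "0 < s0" "s0 < 1"
    and M: "\<And>w. cmod w \<le> s0 \<Longrightarrow> cmod (f w) \<le> M"
  shows "cmod (taylor_coeff f k) \<le> M / s0^k"
proof -
  have hol': "f holomorphic_on ball 0 s0" using hol s by (elim holomorphic_on_subset) auto
  have cont: "continuous_on (cball 0 s0) f"
    using holomorphic_on_imp_continuous_on[OF hol] s by (elim continuous_on_subset) auto
  have "norm ((deriv ^^ k) f 0) \<le> (fact k) * M / s0^k"
    by (rule Cauchy_inequality[OF hol' cont s(1)]) (auto intro: M)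
  then have "norm ((deriv ^^ k) f 0) / fact k \<le> M / s0^k"
    by (simp add: field_simps)
  then show ?thesis by (simp add: taylor_coeff_def norm_divide)
qed

lemma partial_sum_holo: "partial_sum l f holomorphic_on S"
proof -
  have "partial_sum l f = (\<lambda>z. \<Sum>k<l. taylor_coeff f k * z ^ k)"
    by (simp add: fun_eq_iff partial_sum_def)
  then show ?thesis by (simp add: holomorphic_intros)
qed

lemma remainder_sums:
  assumes hol: "f holomorphic_on ball 0 1" and w: "cmod w < 1"
  shows "(\<lambda>k. taylor_coeff f (k + l) * w^(k+l)) sums (f w - partial_sum l f w)"
proof -
  have "(\<lambda>n. (deriv ^^ n) f 0 / (fact n) * (w-0)^n) sums f w"
    by (rule holomorphic_power_series[OF hol]) (simp add: w)
  then have "(\<lambda>n. taylor_coeff f n * w^n) sums f w"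
    by (simp add: taylor_coeff_def)
  from sums_split_initial_segment[OF this, of l]
  show ?thesis by (simp add: partial_sum_def)
qed

lemma remainder_bound:
  assumes hol: "f holomorphic_on ball 0 1" and s: "0 < s0" "s0 < 1"
    and M: "\<And>w. cmod w \<le> s0 \<Longrightarrow> cmod (f w) \<le> M"
    and r: "0 \<le> r" "r < s0" and w: "cmod w \<le> r"
  shows "cmod (f w - partial_sum l f w) \<le> M * (r / s0)^l / (1 - r / s0)"
proof -
  define q where "q = r / s0"
  have q: "0 \<le> q" "q < 1" using r s by (auto simp: q_def)
  have "cmod (f 0) \<le> M" using M[of 0] s by simp
  then have M0: "0 \<le> M" using norm_ge_zero[of "f 0"] by linarith
  have S: "(\<lambda>k. taylor_coeff f (k + l) * w^(k+l)) sums (f w - partial_sum l f w)"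
    by (rule remainder_sums[OF hol]) (use w r s in auto)
  have G: "(\<lambda>k. M * q^l * q^k) sums (M * q^l * (1 / (1 - q)))"
    by (rule sums_mult) (rule geometric_sums, use q in auto)
  have tb: "norm (taylor_coeff f (k + l) * w^(k+l)) \<le> M * q^l * q^k" for k
  proof -
    have "norm (taylor_coeff f (k + l) * w^(k+l)) = cmod (taylor_coeff f (k + l)) * cmod w ^ (k+l)"
      by (simp add: norm_mult norm_power)
    also have "\<dots> \<le> (M / s0^(k+l)) * r^(k+l)"
      by (intro mult_mono taylor_coeff_bound[OF hol s M] power_mono w) (auto simp: M0 s(1) less_imp_le)
    also have "\<dots> = M * q^(k+l)" by (simp add: q_def power_divide)
    also have "\<dots> = M * q^l * q^k" by (simp add: power_add mult_ac)
    finally show ?thesis .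
  qed
  have "norm (f w - partial_sum l f w) \<le> (\<Sum>k. M * q^l * q^k)"
    using norm_suminf_le[OF tb sums_summable[OF G]] sums_unique[OF S] by simp
  also have "\<dots> = M * q^l * (1 / (1 - q))" by (rule sums_unique[OF G, symmetric])
  finally show ?thesis by (simp add: q_def)
qed

lemma remainder_deriv_bound:
  assumes hol: "f holomorphic_on ball 0 1" and s: "0 < s0" "s0 < 1"
    and M: "\<And>w. cmod w \<le> s0 \<Longrightarrow> cmod (f w) \<le> M"
    and r: "0 \<le> \<rho>" "\<rho> < r" "r < s0" and w: "cmod w \<le> \<rho>"
  shows "cmod (deriv (\<lambda>w. f w - partial_sum l f w) w) \<le> M * (r / s0)^l / (1 - r / s0) / (r - \<rho>)"
proof -
  define Rf where "Rf = (\<lambda>w. f w - partial_sum l f w)"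
  have holR: "Rf holomorphic_on ball 0 1" unfolding Rf_def
    using hol partial_sum_holo[of l f "ball 0 1"] by (intro holomorphic_intros) auto
  have sub: "cball w (r - \<rho>) \<subseteq> cball 0 r"
  proof
    fix x assume "x \<in> cball w (r - \<rho>)"
    then have "cmod (x - w) \<le> r - \<rho>" by (simp add: dist_norm norm_minus_commute)
    moreover have "cmod x \<le> cmod w + cmod (x - w)" using norm_triangle_ineq[of w "x - w"] by simp
    ultimately show "x \<in> cball 0 r" using w by simp
  qed
  have sub1: "cball 0 r \<subseteq> ball (0::complex) 1" using r s by auto
  have holR': "Rf holomorphic_on ball w (r - \<rho>)"
    using holR sub sub1 ball_subset_cball[of w "r - \<rho>"] by (elim holomorphic_on_subset) blast
  have contR: "continuous_on (cball w (r - \<rho>)) Rf"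
    using holomorphic_on_imp_continuous_on[OF holR] sub sub1 by (elim continuous_on_subset) blast
  have "norm ((deriv ^^ 1) Rf w) \<le> (fact 1) * (M * (r / s0)^l / (1 - r / s0)) / (r - \<rho>)^1"
  proof (rule Cauchy_inequality[OF holR' contR])
    show "0 < r - \<rho>" using r by simp
    fix x assume "norm (w - x) = r - \<rho>"
    then have "x \<in> cball w (r - \<rho>)" by (simp add: dist_norm)
    then have "x \<in> cball 0 r" using sub by blast
    then show "norm (Rf x) \<le> M * (r / s0)^l / (1 - r / s0)"
      unfolding Rf_def by (intro remainder_bound[OF hol s M]) (use r in auto)
  qed
  then show ?thesis by (simp add: Rf_def)
qed



lemma partial_sum_0: "l \<ge> 1 \<Longrightarrow> partial_sum l f 0 = f 0"
proof -
  assume "l \<ge> 1"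
  then obtain l' where l: "l = Suc l'" by (cases l) auto
  have "partial_sum l f 0 = (\<Sum>k<Suc l'. taylor_coeff f k * 0 ^ k)" by (simp add: partial_sum_def l)
  also have "\<dots> = taylor_coeff f 0" by (induction l') auto
  also have "\<dots> = f 0" by (simp add: taylor_coeff_def)
  finally show ?thesis .
qed

lemma div_pi_fin: "x < \<top> \<Longrightarrow> x / ennreal pi < (\<top>::ennreal)"
  by (metis ennreal_divide_eq_top_iff ennreal_less_zero_iff less_top pi_gt_zero zero_order(4))

lemma div_pi_fin2: "x / ennreal pi < \<infinity> \<Longrightarrow> x < (\<infinity>::ennreal)"
  by (metis ennreal_le_epsilon ennreal_neq_top ennreal_top_divide
    infinity_ennreal_def neq_top_trans)

lemma div_pi_fin': "x < \<infinity> \<Longrightarrow> x / ennreal pi < (\<infinity>::ennreal)"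
  using div_pi_fin[of x] by (simp add: infinity_ennreal_def)

lemma inH_id:
  assumes w: "weight \<omega>"
  shows "inH \<omega> id"
proof -
  have si: "set_integrable lborel {0..<1} \<omega>" and c: "continuous_on {0..<1} \<omega>"
    and pos: "\<forall>r\<in>{0..<1}. \<omega> r > 0" using w by (auto simp: weight_def)
  have "(\<integral>\<^sup>+ z. ennreal ((cmod (deriv id z))\<^sup>2 * \<omega> (cmod z)) * indicator (ball 0 1) z \<partial>lborel)
      = (\<integral>\<^sup>+z. ennreal (\<omega> (cmod z)) * indicator (ball 0 1) z \<partial>lborel)"
    by (simp add: id_def)
  also have "\<dots> < \<infinity>" by (rule disc_radial_finite[OF si c pos])
  finally have "(\<integral>\<^sup>+ z. ennreal ((cmod (deriv id z))\<^sup>2 * \<omega> (cmod z)) * indicator (ball 0 1) z \<partial>lborel) / ennreal pi < \<infinity>"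
    by (rule div_pi_fin')
  then show ?thesis
    by (simp add: inH_def Hnorm2_def id_def[symmetric] less_top)
qed



theorem lemma3p8:
  fixes \<omega> :: "real \<Rightarrow> real" and \<phi> :: "complex \<Rightarrow> complex" and \<rho> \<epsilon> :: real
  assumes "weight \<omega>"
    and "symbol \<omega> \<phi>"
    and "\<rho> = (SUP z\<in>ball 0 1. cmod (\<phi> z))"
    and "\<rho> < 1"
    and "\<epsilon> > 0"
    and "\<rho> * exp \<epsilon> < 1"
  shows "\<exists>K>0. \<forall>f. inH \<omega> f \<and> Hnorm \<omega> f \<le> 1 \<longrightarrow>
           (\<forall>l::nat. l \<ge> 1 \<longrightarrow>
              Hnorm \<omega> (\<lambda>z. f (\<phi> z) - partial_sum l f (\<phi> z)) \<le> K * \<rho> ^ l * exp (\<epsilon> * real l))"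
proof -
  note w = assms(1)
  have holphi: "\<phi> holomorphic_on ball 0 1" and img: "\<phi> ` ball 0 1 \<subseteq> ball 0 1"
    and comp: "\<And>f. inH \<omega> f \<Longrightarrow> inH \<omega> (f \<circ> \<phi>)"
    using assms(2) by (auto simp: symbol_def)
  have pos: "\<forall>r\<in>{0..<1}. \<omega> r > 0" using w by (simp add: weight_def)
  have bdd: "bdd_above ((\<lambda>z. cmod (\<phi> z)) ` ball 0 1)"
    using img by (intro bdd_aboveI[of _ 1]) (auto simp: less_imp_le)
  have phile: "cmod (\<phi> z) \<le> \<rho>" if "z \<in> ball 0 1" for z
    unfolding assms(3) by (rule cSUP_upper[OF that bdd])
  have "cmod (\<phi> 0) \<le> \<rho>" by (rule phile) simp
  then have rho0: "0 \<le> \<rho>" using norm_ge_zero[of "\<phi> 0"] by linarith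
  show ?thesis
  proof (cases "\<rho> = 0")
    case True
    show ?thesis
    proof (intro exI[of _ 1] conjI allI impI)
      fix f :: "complex \<Rightarrow> complex" and l :: nat
      assume f: "inH \<omega> f \<and> Hnorm \<omega> f \<le> 1" and l: "1 \<le> l"
      define g where "g = (\<lambda>z. f (\<phi> z) - partial_sum l f (\<phi> z))"
      have g0: "g z = 0" if "z \<in> ball 0 1" for z
        using phile[OF that] True partial_sum_0[OF l, of f] by (simp add: g_def)
      have dg: "deriv g z = 0" if "z \<in> ball 0 1" for z
      proof -
        have "((\<lambda>z. 0) has_field_derivative 0) (at z)" by simp
        then have "(g has_field_derivative 0) (at z)"
          by (rule has_field_derivative_transform_within_open[where S="ball 0 1"]) (use that g0 in auto)
        then show ?thesis by (rule DERIV_imp_deriv)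
      qed
      have "Hnorm2 \<omega> g = 0"
      proof -
        have "(\<integral>\<^sup>+ z. ennreal ((cmod (deriv g z))\<^sup>2 * \<omega> (cmod z)) * indicator (ball 0 1) z \<partial>lborel) = (\<integral>\<^sup>+ (z::complex). 0 \<partial>lborel)"
          by (intro nn_integral_cong) (auto simp: dg split: split_indicator)
        then show ?thesis by (simp add: Hnorm2_def g0)
      qed
      then have "Hnorm \<omega> g = 0" by (simp add: Hnorm_def)
      moreover have "1 * \<rho> ^ l * exp (\<epsilon> * real l) = 0" using True l by simp
      ultimately show "Hnorm \<omega> (\<lambda>z. f (\<phi> z) - partial_sum l f (\<phi> z)) \<le> 1 * \<rho> ^ l * exp (\<epsilon> * real l)"
        by (simp add: g_def)
    qed simp
  next
    case False
    then have rhop: "\<rho> > 0" using rho0 by simp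
    define s0 where "s0 = exp (- \<epsilon> / 2)"
    define r where "r = \<rho> * exp (\<epsilon> / 2)"
    define q where "q = \<rho> * exp \<epsilon>"
    have s0: "0 < s0" "s0 < 1" using assms(5) by (auto simp: s0_def)
    have e2: "exp \<epsilon> = exp (\<epsilon> / 2) * exp (\<epsilon> / 2)" by (simp add: exp_add[symmetric])
    have rs: "r < s0"
    proof -
      have "r * exp (\<epsilon> / 2) = q" by (simp add: r_def q_def e2)
      moreover have "s0 * exp (\<epsilon> / 2) = 1" by (simp add: s0_def exp_minus field_simps)
      ultimately show ?thesis using assms(6) q_def by (smt (verit) exp_gt_zero mult_right_less_imp_less)
    qed
    have rhor: "\<rho> < r" using rhop assms(5) by (simp add: r_def)
    have qrs: "r / s0 = q"
    proof -
      have "s0 * exp (\<epsilon> / 2) = 1" by (simp add: s0_def exp_minus field_simps)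
      then have "r / s0 = r * exp (\<epsilon> / 2)" using s0 by (simp add: field_simps)
      then show ?thesis by (simp add: r_def q_def e2)
    qed
    have q: "0 < q" "q < 1" using rhop assms(6) by (auto simp: q_def)
    obtain M where M: "M > 0" "\<And>f w. inH \<omega> f \<Longrightarrow> Hnorm \<omega> f \<le> 1 \<Longrightarrow> cmod w \<le> s0 \<Longrightarrow> cmod (f w) \<le> M"
      using uniform_bound[OF w s0] by blast
    define I where "I = (\<integral>\<^sup>+ z. ennreal ((cmod (deriv \<phi> z))\<^sup>2 * \<omega> (cmod z)) * indicator (ball 0 1) z \<partial>lborel)"
    have Ifin: "I < \<infinity>"
    proof -
      have "inH \<omega> (id \<circ> \<phi>)" by (rule comp[OF inH_id[OF w]])
      then have "Hnorm2 \<omega> \<phi> < \<infinity>" by (simp add: inH_def)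
      then have "I / ennreal pi < \<infinity>"
        unfolding Hnorm2_def I_def by (simp add: less_top)
      then show ?thesis by (rule div_pi_fin2)
    qed
    define Ir where "Ir = enn2real I"
    have IIr: "I = ennreal Ir" using Ifin by (simp add: Ir_def less_top)
    have Ir0: "0 \<le> Ir" by (simp add: Ir_def)
    define A where "A = M / (1 - q)"
    define B where "B = M / (1 - q) / (r - \<rho>)"
    have A0: "0 \<le> A" and B0: "0 \<le> B" using M(1) q rhor by (auto simp: A_def B_def)
    define K where "K = sqrt (A^2 + B^2 * Ir / pi) + 1"
    show ?thesis
    proof (intro exI[of _ K] conjI allI impI)
      have "0 \<le> A^2 + B^2 * Ir / pi" using Ir0 by simp
      then show "0 < K" unfolding K_def by (smt (verit) real_sqrt_ge_zero)
      fix f :: "complex \<Rightarrow> complex" and l :: nat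
      assume f: "inH \<omega> f \<and> Hnorm \<omega> f \<le> 1" and l: "1 \<le> l"
      have holf: "f holomorphic_on ball 0 1" using f by (simp add: inH_def)
      have Mf: "\<And>w. cmod w \<le> s0 \<Longrightarrow> cmod (f w) \<le> M" using M(2) f by blast
      define Rf where "Rf = (\<lambda>w. f w - partial_sum l f w)"
      have holR: "Rf holomorphic_on ball 0 1" unfolding Rf_def
        using holf partial_sum_holo[of l f "ball 0 1"] by (intro holomorphic_intros) auto
      have Rb: "cmod (Rf w) \<le> A * q^l" if "cmod w \<le> \<rho>" for w
        using remainder_bound[OF holf s0 Mf _ rs, of w l] that rho0 rhor
        by (simp add: Rf_def qrs A_def)
      have dRb: "cmod (deriv Rf w) \<le> B * q^l" if "cmod w \<le> \<rho>" for w
        using remainder_deriv_bound[OF holf s0 Mf rho0 rhor rs that, of l]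
        by (simp add: Rf_def qrs B_def)
      define g where "g = (\<lambda>z. f (\<phi> z) - partial_sum l f (\<phi> z))"
      have gR: "g = Rf \<circ> \<phi>" by (simp add: g_def Rf_def fun_eq_iff)
      have dg: "deriv g z = deriv Rf (\<phi> z) * deriv \<phi> z" if "z \<in> ball 0 1" for z
      proof -
        have "\<phi> field_differentiable at z"
          using holphi that by (intro holomorphic_on_imp_differentiable_at) auto
        moreover have "Rf field_differentiable at (\<phi> z)"
          using holR img that by (intro holomorphic_on_imp_differentiable_at) auto
        ultimately show ?thesis unfolding gR by (rule deriv_chain)
      qed
      have g0: "(cmod (g 0))\<^sup>2 \<le> (A * q^l)\<^sup>2"
        using Rb[OF phile[of 0]] by (simp add: gR power_mono)
      have int: "(\<integral>\<^sup>+ z. ennreal ((cmod (deriv g z))\<^sup>2 * \<omega> (cmod z)) * indicator (ball 0 1) z \<partial>lborel)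
          \<le> ennreal ((B * q^l)\<^sup>2) * I"
      proof -
        have "(\<integral>\<^sup>+ z. ennreal ((cmod (deriv g z))\<^sup>2 * \<omega> (cmod z)) * indicator (ball 0 1) z \<partial>lborel)
            \<le> (\<integral>\<^sup>+ z. ennreal ((B * q^l)\<^sup>2) * (ennreal ((cmod (deriv \<phi> z))\<^sup>2 * \<omega> (cmod z)) * indicator (ball 0 1) z) \<partial>lborel)"
        proof (intro nn_integral_mono)
          fix z
          show "ennreal ((cmod (deriv g z))\<^sup>2 * \<omega> (cmod z)) * indicator (ball 0 1) z
              \<le> ennreal ((B * q^l)\<^sup>2) * (ennreal ((cmod (deriv \<phi> z))\<^sup>2 * \<omega> (cmod z)) * indicator (ball 0 1) z)"
          proof (cases "z \<in> ball 0 1")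
            case True
            have om: "0 \<le> \<omega> (cmod z)" using pos True by (auto intro: less_imp_le)
            have "cmod (deriv Rf (\<phi> z)) \<le> B * q^l" by (rule dRb[OF phile[OF True]])
            then have "(cmod (deriv Rf (\<phi> z)))\<^sup>2 \<le> (B * q^l)\<^sup>2" by (simp add: power_mono)
            then have "(cmod (deriv g z))\<^sup>2 \<le> (B * q^l)\<^sup>2 * (cmod (deriv \<phi> z))\<^sup>2"
              by (simp add: dg[OF True] norm_mult power_mult_distrib mult_right_mono)
            then have "(cmod (deriv g z))\<^sup>2 * \<omega> (cmod z) \<le> (B * q^l)\<^sup>2 * ((cmod (deriv \<phi> z))\<^sup>2 * \<omega> (cmod z))"
              using om by (simp add: mult_right_mono mult.assoc[symmetric])
            then have "ennreal ((cmod (deriv g z))\<^sup>2 * \<omega> (cmod z)) \<le> ennreal ((B * q^l)\<^sup>2 * ((cmod (deriv \<phi> z))\<^sup>2 * \<omega> (cmod z)))"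
              by (rule ennreal_leI)
            also have "\<dots> = ennreal ((B * q^l)\<^sup>2) * ennreal ((cmod (deriv \<phi> z))\<^sup>2 * \<omega> (cmod z))"
              using om by (intro ennreal_mult) auto
            finally show ?thesis using True by simp
          next
            case False then show ?thesis by simp
          qed
        qed
        also have "\<dots> = ennreal ((B * q^l)\<^sup>2) * I"
          unfolding I_def by (rule nn_integral_cmult) (simp add: J_meas[OF w holomorphic_deriv[OF holphi]] measurable_lborel1)
        finally show ?thesis .
      qed
      define X where "X = (q^l)\<^sup>2 * (A^2 + B^2 * Ir / pi)"
      have X0: "0 \<le> X" using Ir0 by (simp add: X_def)
      have "Hnorm2 \<omega> g \<le> ennreal ((A * q^l)\<^sup>2) + ennreal ((B * q^l)\<^sup>2) * I / ennreal pi"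
        unfolding Hnorm2_def
        by (intro add_mono ennreal_leI g0 divide_right_mono_ennreal int)
      also have "\<dots> = ennreal X"
      proof -
        have "ennreal ((B * q^l)\<^sup>2) * I / ennreal pi = ennreal ((B * q^l)\<^sup>2 * Ir / pi)"
          unfolding IIr by (simp add: ennreal_mult[symmetric] divide_ennreal Ir0)
        then show ?thesis
          unfolding X_def using Ir0
          by (simp add: ennreal_plus[symmetric] power_mult_distrib field_simps)
      qed
      finally have H: "Hnorm2 \<omega> g \<le> ennreal X" .
      have "enn2real (Hnorm2 \<omega> g) \<le> X"
        using H X0 by (metis enn2real_ennreal enn2real_mono ennreal_neq_top less_top)
      then have "Hnorm \<omega> g \<le> sqrt X" by (simp add: Hnorm_def)
      also have "sqrt X = q^l * sqrt (A^2 + B^2 * Ir / pi)"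
        using q by (simp add: X_def real_sqrt_mult)
      also have "\<dots> \<le> q^l * K" using q by (intro mult_left_mono) (auto simp: K_def)
      also have "q^l * K = K * \<rho> ^ l * exp (\<epsilon> * real l)"
        by (simp add: q_def power_mult_distrib exp_of_nat_mult[symmetric] mult_ac)
      finally show "Hnorm \<omega> (\<lambda>z. f (\<phi> z) - partial_sum l f (\<phi> z)) \<le> K * \<rho> ^ l * exp (\<epsilon> * real l)"
        by (simp add: g_def)
    qed
  qed
qed

end
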